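(* Let $\mathcal{A}=(Q,\delta,I,F)$ be a complete Büchi automaton, let $p,q\in Q$ with $p\preceq_{\mathit{di}}q$, let $\alpha$ be an infinite word and let $\mathcal{G}_\alpha=(V,E)$ be the run DAG of $\mathcal{A}$ over $\alpha$. Then for all $i\ge0$, if $(p,i)\in V$ and $(q,i)\in V$, then $\mathrm{rank}_\alpha(p,i)\le\mathrm{rank}_\alpha(q,i)$.
   Context: A Büchi automaton is $\mathcal{A}=(Q,\delta,I,F)$ over a finite alphabet $\Sigma$, $\delta:Q\times\Sigma\to2^Q$, complete if $\delta(q,a)\ne\emptyset$ always; $n=|Q|$. A run from $q$ on $\alpha=\alpha_0\alpha_1\cdots$ is a state sequence $\rho$ with $\rho_0=q$, $\rho_{i+1}\in\delta(\rho_i,\alpha_i)$. Direct simulation: in the game from $(p_0,r_0)$, in round $i$ Spoiler picks $p_i\xrightarrow{\alpha_i}p_{i+1}$ and Duplicator answers $r_i\xrightarrow{\alpha_i}r_{i+1}$; a Duplicator strategy is a map $\sigma$ with $\sigma(r,p\xrightarrow{a}p')\in\delta(r,a)$ (no lookahead). Duplicator wins if for all $i$, $p_i\in F$ implies $r_i\in F$. $p\preceq_{\mathit{di}}r$ iff Duplicator has a winning strategy from $(p,r)$. Run DAG: $\mathcal{G}_\alpha=(V,E)$ with $V\subseteq Q\times\omega$, $(q,i)\in V$ iff some run of $\mathcal{A}$ over $\alpha$ from an initial state has $\rho_i=q$, and $((q,i),(q',i'))\in E$ iff $i'=i+1$ and $q'\in\delta(q,\alpha_i)$. A vertex $(p,i)$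 is accepting if $p\in F$; finite in a subgraph if only finitely many vertices are reachable from it there; endangered if it cannot reach an accepting vertex there. Ranks: let $\mathcal{G}^0=\mathcal{G}_\alpha$, $j=0$; repeat until fixpoint or for at most $2n+1$ steps: assign rank $j$ to all finite vertices of $\mathcal{G}^j$, let $\mathcal{G}^{j+1}$ be $\mathcal{G}^j$ without them; assign rank $j+1$ to all endangered vertices of $\mathcal{G}^{j+1}$, let $\mathcal{G}^{j+2}$ be $\mathcal{G}^{j+1}$ without them; $j:=j+2$. Vertices never assigned a rank get rank $\omega$. $\mathrm{rank}_\alpha(v)$ is the rank of $v$. *)

theory Defs
  imports Main "HOL-Library.Extended_Nat"
begin

definition buchi :: "'q set \<Rightarrow> 'a set \<Rightarrow> ('q \<Rightarrow> 'a \<Rightarrow> 'q set) \<Rightarrow> 'q set \<Rightarrow> 'q set \<Rightarrow> bool" where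
  "buchi Q Sig delta I F \<longleftrightarrow> finite Q \<and> finite Sig \<and> I \<subseteq> Q \<and> F \<subseteq> Q \<and>
     (\<forall>q\<in>Q. \<forall>a\<in>Sig. delta q a \<subseteq> Q)"

definition complete_aut :: "'q set \<Rightarrow> 'a set \<Rightarrow> ('q \<Rightarrow> 'a \<Rightarrow> 'q set) \<Rightarrow> bool" where
  "complete_aut Q Sig delta \<longleftrightarrow> (\<forall>q\<in>Q. \<forall>a\<in>Sig. delta q a \<noteq> {})"

text \<open>Duplicator's answers in the direct simulation game, following a memoryless strategy sigma
  (which maps Duplicator's current state and Spoiler's move (p, a, p') to a successor).\<close>

fun dup_run :: "('q \<Rightarrow> 'q \<times> 'a \<times> 'q \<Rightarrow> 'q) \<Rightarrow> 'q \<Rightarrow> (nat \<Rightarrow> 'q) \<Rightarrow> (nat \<Rightarrow> 'a) \<Rightarrow> nat \<Rightarrow> 'q" where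
  "dup_run \<sigma> r0 ps w 0 = r0"
| "dup_run \<sigma> r0 ps w (Suc i) = \<sigma> (dup_run \<sigma> r0 ps w i) (ps i, w i, ps (Suc i))"

definition dsim :: "'q set \<Rightarrow> 'a set \<Rightarrow> ('q \<Rightarrow> 'a \<Rightarrow> 'q set) \<Rightarrow> 'q set \<Rightarrow> 'q \<Rightarrow> 'q \<Rightarrow> bool" where
  "dsim Q Sig delta F p r \<longleftrightarrow>
     (\<exists>\<sigma>. (\<forall>r'\<in>Q. \<forall>a\<in>Sig. \<forall>p'\<in>Q. \<forall>p''\<in>delta p' a. \<sigma> r' (p', a, p'') \<in> delta r' a) \<and>
          (\<forall>w ps. (\<forall>i. w i \<in> Sig) \<longrightarrow> ps 0 = p \<longrightarrow> (\<forall>i. ps (Suc i) \<in> delta (ps i) (w i)) \<longrightarrow>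
              (\<forall>i. ps i \<in> F \<longrightarrow> dup_run \<sigma> r ps w i \<in> F)))"

definition is_run :: "('q \<Rightarrow> 'a \<Rightarrow> 'q set) \<Rightarrow> (nat \<Rightarrow> 'a) \<Rightarrow> (nat \<Rightarrow> 'q) \<Rightarrow> bool" where
  "is_run delta \<alpha> \<rho> \<longleftrightarrow> (\<forall>j. \<rho> (Suc j) \<in> delta (\<rho> j) (\<alpha> j))"

definition runV :: "('q \<Rightarrow> 'a \<Rightarrow> 'q set) \<Rightarrow> 'q set \<Rightarrow> (nat \<Rightarrow> 'a) \<Rightarrow> ('q \<times> nat) set" where
  "runV delta I \<alpha> = {(q, i). \<exists>\<rho>. \<rho> 0 \<in> I \<and> is_run delta \<alpha> \<rho> \<and> \<rho> i = q}"

definition runE :: "('q \<Rightarrow> 'a \<Rightarrow> 'q set) \<Rightarrow> 'q set \<Rightarrow> (nat \<Rightarrow> 'a) \<Rightarrow> (('q \<times> nat) \<times> ('q \<times> nat)) set" where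
  "runE delta I \<alpha> = {((q, i), (q', i')). (q, i) \<in> runV delta I \<alpha> \<and> (q', i') \<in> runV delta I \<alpha> \<and>
                       i' = Suc i \<and> q' \<in> delta q (\<alpha> i)}"

definition reach_in :: "('q \<Rightarrow> 'a \<Rightarrow> 'q set) \<Rightarrow> 'q set \<Rightarrow> (nat \<Rightarrow> 'a) \<Rightarrow> ('q \<times> nat) set
    \<Rightarrow> 'q \<times> nat \<Rightarrow> ('q \<times> nat) set" where
  "reach_in delta I \<alpha> S v = {u. (v, u) \<in> (runE delta I \<alpha> \<inter> (S \<times> S))\<^sup>*}"

definition finite_vs :: "('q \<Rightarrow> 'a \<Rightarrow> 'q set) \<Rightarrow> 'q set \<Rightarrow> (nat \<Rightarrow> 'a) \<Rightarrow> ('q \<times> nat) set \<Rightarrow> ('q \<times> nat) set" where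
  "finite_vs delta I \<alpha> S = {v \<in> S. finite (reach_in delta I \<alpha> S v)}"

definition endangered_vs :: "('q \<Rightarrow> 'a \<Rightarrow> 'q set) \<Rightarrow> 'q set \<Rightarrow> 'q set \<Rightarrow> (nat \<Rightarrow> 'a) \<Rightarrow> ('q \<times> nat) set \<Rightarrow> ('q \<times> nat) set" where
  "endangered_vs delta I F \<alpha> S = {v \<in> S. \<forall>u \<in> reach_in delta I \<alpha> S v. fst u \<notin> F}"

fun subG :: "('q \<Rightarrow> 'a \<Rightarrow> 'q set) \<Rightarrow> 'q set \<Rightarrow> 'q set \<Rightarrow> (nat \<Rightarrow> 'a) \<Rightarrow> nat \<Rightarrow> ('q \<times> nat) set" where
  "subG delta I F \<alpha> 0 = runV delta I \<alpha>"
| "subG delta I F \<alpha> (Suc j) =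
     (if even j then subG delta I F \<alpha> j - finite_vs delta I \<alpha> (subG delta I F \<alpha> j)
      else subG delta I F \<alpha> j - endangered_vs delta I F \<alpha> (subG delta I F \<alpha> j))"

definition rank :: "'q set \<Rightarrow> ('q \<Rightarrow> 'a \<Rightarrow> 'q set) \<Rightarrow> 'q set \<Rightarrow> 'q set \<Rightarrow> (nat \<Rightarrow> 'a) \<Rightarrow> 'q \<times> nat \<Rightarrow> enat" where
  "rank Q delta I F \<alpha> v =
     (if \<exists>j \<le> 2 * card Q. v \<in> subG delta I F \<alpha> j - subG delta I F \<alpha> (Suc j)
      then enat (LEAST j. v \<in> subG delta I F \<alpha> j - subG delta I F \<alpha> (Suc j))
      else \<infinity>)"

end

theory Submission
  imports Defs
begin

definition RelS :: "'q set \<Rightarrow> 'a set \<Rightarrow> ('q \<Rightarrow> 'a \<Rightarrow> 'q set) \<Rightarrow> 'q set \<Rightarrow> 'q \<Rightarrow> 'q \<Rightarrow> bool" where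
  "RelS Q Sig delta F p q \<longleftrightarrow> p \<in> Q \<and> q \<in> Q \<and> dsim Q Sig delta F p q"

lemma dup_shift:
  "dup_run \<sigma> q (case_nat p ps) (case_nat a w) (Suc k) = dup_run \<sigma> (\<sigma> q (p, a, ps 0)) ps w k"
  by (induction k) auto

lemma RelS_succ:
  assumes b: "buchi Q Sig delta I F" and r: "RelS Q Sig delta F p q" and a: "a \<in> Sig"
    and p': "p' \<in> delta p a"
  shows "\<exists>q' \<in> delta q a. RelS Q Sig delta F p' q'"
proof -
  from r obtain \<sigma> where val: "\<forall>r'\<in>Q. \<forall>a\<in>Sig. \<forall>p'\<in>Q. \<forall>p''\<in>delta p' a. \<sigma> r' (p', a, p'') \<in> delta r' a"
    and win: "\<forall>w ps. (\<forall>i. w i \<in> Sig) \<longrightarrow> ps 0 = p \<longrightarrow> (\<forall>i. ps (Suc i) \<in> delta (ps i) (w i)) \<longrightarrow>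
              (\<forall>i. ps i \<in> F \<longrightarrow> dup_run \<sigma> q ps w i \<in> F)" and pQ: "p \<in> Q" and qQ: "q \<in> Q"
    unfolding RelS_def dsim_def by blast
  define q' where "q' = \<sigma> q (p, a, p')"
  have q'd: "q' \<in> delta q a" using val pQ qQ a p' unfolding q'_def by blast
  have q'Q: "q' \<in> Q" using b q'd qQ a unfolding buchi_def by blast
  have p'Q: "p' \<in> Q" using b p' pQ a unfolding buchi_def by blast
  have "dsim Q Sig delta F p' q'"
    unfolding dsim_def
  proof (intro exI conjI allI impI)
    show "\<forall>r'\<in>Q. \<forall>a\<in>Sig. \<forall>p'\<in>Q. \<forall>p''\<in>delta p' a. \<sigma> r' (p', a, p'') \<in> delta r' a" by (rule val)
  next
    fix w ps i
    assume w: "\<forall>i. w i \<in> Sig" and p0: "ps 0 = p'" and st: "\<forall>i. ps (Suc i) \<in> delta (ps i) (w i)"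
      and F: "ps i \<in> F"
    have w2: "\<forall>i. case_nat a w i \<in> Sig" using w a by (simp split: nat.split)
    have st2: "\<forall>i. case_nat p ps (Suc i) \<in> delta (case_nat p ps i) (case_nat a w i)"
      using st p0 p' by (simp split: nat.split)
    have "dup_run \<sigma> q (case_nat p ps) (case_nat a w) (Suc i) \<in> F"
    proof -
      have "\<forall>i. case_nat p ps i \<in> F \<longrightarrow> dup_run \<sigma> q (case_nat p ps) (case_nat a w) i \<in> F"
        using win w2 st2 by simp
      then show ?thesis using F by (metis nat.case(2))
    qed
    then show "dup_run \<sigma> q' ps w i \<in> F" using p0 dup_shift[of \<sigma> q p ps a w i] unfolding q'_def by metis
  qed
  then show ?thesis using q'd q'Q p'Q qQ unfolding RelS_def by blast
qed

lemma RelS_F: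
  assumes b: "buchi Q Sig delta I F" and c: "complete_aut Q Sig delta" and a0: "a0 \<in> Sig"
    and r: "RelS Q Sig delta F p q" and pF: "p \<in> F"
  shows "q \<in> F"
proof -
  from r obtain \<sigma> where
    win: "\<forall>w ps. (\<forall>i. w i \<in> Sig) \<longrightarrow> ps 0 = p \<longrightarrow> (\<forall>i. ps (Suc i) \<in> delta (ps i) (w i)) \<longrightarrow>
              (\<forall>i. ps i \<in> F \<longrightarrow> dup_run \<sigma> q ps w i \<in> F)" and pQ: "p \<in> Q"
    unfolding RelS_def dsim_def by blast
  define ps where "ps = rec_nat p (\<lambda>i x. SOME y. y \<in> delta x a0)"
  have Q: "ps i \<in> Q \<and> ps (Suc i) \<in> delta (ps i) a0" for i
  proof (induction i)
    case 0
    have "delta p a0 \<noteq> {}" using c pQ a0 unfolding complete_aut_def by blast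
    then show ?case using pQ unfolding ps_def by (simp add: some_in_eq)
  next
    case (Suc i)
    then have Q1: "ps (Suc i) \<in> Q" using b a0 unfolding buchi_def by blast
    have "delta (ps (Suc i)) a0 \<noteq> {}" using c Q1 a0 unfolding complete_aut_def by blast
    then show ?case using Q1 unfolding ps_def by (simp add: some_in_eq)
  qed
  have "dup_run \<sigma> q ps (\<lambda>_. a0) 0 \<in> F"
    using win[rule_format, of "\<lambda>_. a0" ps 0] a0 Q pF by (simp add: ps_def)
  then show ?thesis by simp
qed

lemma subG_Suc_sub: "subG delta I F \<alpha> (Suc j) \<subseteq> subG delta I F \<alpha> j"
  by auto

lemma subG_V: "subG delta I F \<alpha> j \<subseteq> runV delta I \<alpha>"
proof (induction j)
  case 0 then show ?case by simp
next
  case (Suc j) then show ?case using subG_Suc_sub[of delta I F \<alpha> j] by blast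
qed

lemma subG_anti: "j \<le> k \<Longrightarrow> subG delta I F \<alpha> k \<subseteq> subG delta I F \<alpha> j"
proof (induction k rule: dec_induct)
  case base then show ?case by simp
next
  case (step k) then show ?case using subG_Suc_sub[of delta I F \<alpha> k] by blast
qed

lemma ext_run:
  assumes b: "buchi Q Sig delta I F" and c: "complete_aut Q Sig delta" and al: "\<forall>k. \<alpha> k \<in> Sig"
    and x: "x \<in> Q"
  shows "\<exists>f. f 0 = x \<and> (\<forall>m. f m \<in> Q \<and> f (Suc m) \<in> delta (f m) (\<alpha> (n + m)))"
proof -
  define f where "f = rec_nat x (\<lambda>m y. SOME z. z \<in> delta y (\<alpha> (n + m)))"
  have "f m \<in> Q \<and> f (Suc m) \<in> delta (f m) (\<alpha> (n + m))" for m
  proof (induction m)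
    case 0
    have "delta x (\<alpha> n) \<noteq> {}" using c x al unfolding complete_aut_def by blast
    then show ?case using x unfolding f_def by (simp add: some_in_eq)
  next
    case (Suc m)
    then have Q1: "f (Suc m) \<in> Q" using b al unfolding buchi_def by blast
    have "delta (f (Suc m)) (\<alpha> (n + Suc m)) \<noteq> {}" using c Q1 al unfolding complete_aut_def by blast
    then show ?case using Q1 unfolding f_def by (simp add: some_in_eq)
  qed
  moreover have "f 0 = x" unfolding f_def by simp
  ultimately show ?thesis by blast
qed

lemma runV_succ:
  assumes b: "buchi Q Sig delta I F" and c: "complete_aut Q Sig delta" and al: "\<forall>k. \<alpha> k \<in> Sig"
    and v: "(q, k) \<in> runV delta I \<alpha>" and q': "q' \<in> delta q (\<alpha> k)" and q'Q: "q' \<in> Q"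
  shows "(q', Suc k) \<in> runV delta I \<alpha>"
proof -
  from v obtain \<rho> where r0: "\<rho> 0 \<in> I" and rr: "is_run delta \<alpha> \<rho>" and rk: "\<rho> k = q"
    unfolding runV_def by blast
  obtain f where f0: "f 0 = q'" and fs: "\<forall>m. f m \<in> Q \<and> f (Suc m) \<in> delta (f m) (\<alpha> (Suc k + m))"
    using ext_run[OF b c al q'Q, of "Suc k"] by blast
  define \<rho>' where "\<rho>' = (\<lambda>m. if m \<le> k then \<rho> m else f (m - Suc k))"
  have "is_run delta \<alpha> \<rho>'"
    unfolding is_run_def
  proof
    fix j
    show "\<rho>' (Suc j) \<in> delta (\<rho>' j) (\<alpha> j)"
    proof (cases "j < k")
      case True then show ?thesis using rr unfolding \<rho>'_def is_run_def by auto
    next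
      case False
      show ?thesis
      proof (cases "j = k")
        case True then show ?thesis using q' f0 rk unfolding \<rho>'_def by simp
      next
        case False
        with \<open>\<not> j < k\<close> have "j > k" by simp
        then obtain m where m: "j = Suc k + m" by (metis less_imp_Suc_add add_Suc)
        then show ?thesis using fs unfolding \<rho>'_def by (simp add: Suc_diff_le)
      qed
    qed
  qed
  moreover have "\<rho>' 0 \<in> I" using r0 unfolding \<rho>'_def by simp
  moreover have "\<rho>' (Suc k) = q'" using f0 unfolding \<rho>'_def by simp
  ultimately show ?thesis unfolding runV_def by blast
qed

lemma sim_reach:
  assumes b: "buchi Q Sig delta I F" and c: "complete_aut Q Sig delta" and al: "\<forall>k. \<alpha> k \<in> Sig"
    and IH: "\<forall>i p q. RelS Q Sig delta F p q \<longrightarrow> (p, i) \<in> runV delta I \<alpha> \<longrightarrow> (q, i) \<in> runV delta I \<alpha>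
              \<longrightarrow> (p, i) \<in> S \<longrightarrow> (q, i) \<in> S"
    and SV: "S \<subseteq> runV delta I \<alpha>"
    and r: "RelS Q Sig delta F p q" and pS: "(p, i) \<in> S" and qV: "(q, i) \<in> runV delta I \<alpha>"
    and path: "((p, i), u) \<in> (runE delta I \<alpha> \<inter> (S \<times> S))\<^sup>*"
  shows "\<exists>q'. ((q, i), (q', snd u)) \<in> (runE delta I \<alpha> \<inter> (S \<times> S))\<^sup>* \<and> RelS Q Sig delta F (fst u) q'
            \<and> (q', snd u) \<in> S \<and> (q', snd u) \<in> runV delta I \<alpha> \<and> u \<in> S"
  using path
proof (induction rule: rtrancl_induct)
  case base
  have "(q, i) \<in> S" using IH r qV pS SV by blast
  then show ?case using r pS qV by auto
next
  case (step y z)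
  obtain y1 k where y: "y = (y1, k)" by (cases y)
  obtain z1 k' where z: "z = (z1, k')" by (cases z)
  from step.IH obtain q' where
    p1: "((q, i), (q', k)) \<in> (runE delta I \<alpha> \<inter> (S \<times> S))\<^sup>*" and r1: "RelS Q Sig delta F y1 q'"
    and s1: "(q', k) \<in> S" and v1: "(q', k) \<in> runV delta I \<alpha>" using y by auto
  from step.hyps(2) have k': "k' = Suc k" and zd: "z1 \<in> delta y1 (\<alpha> k)" and zS: "z \<in> S"
    unfolding runE_def using y z by auto
  obtain q'' where q''d: "q'' \<in> delta q' (\<alpha> k)" and r2: "RelS Q Sig delta F z1 q''"
    using RelS_succ[OF b r1 _ zd] al by blast
  have q''Q: "q'' \<in> Q" using r2 unfolding RelS_def by blast
  have v2: "(q'', Suc k) \<in> runV delta I \<alpha>" using runV_succ[OF b c al v1 q''d q''Q] .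
  have zV: "(z1, Suc k) \<in> runV delta I \<alpha>" using zS SV z k' by blast
  have s2: "(q'', Suc k) \<in> S" using IH r2 zV v2 zS z k' by blast
  have e: "((q', k), (q'', Suc k)) \<in> runE delta I \<alpha> \<inter> (S \<times> S)"
    using v1 v2 q''d s1 s2 unfolding runE_def by auto
  have "((q, i), (q'', Suc k)) \<in> (runE delta I \<alpha> \<inter> (S \<times> S))\<^sup>*"
    using p1 e by (rule rtrancl_into_rtrancl)
  then show ?case using r2 s2 v2 zS z k' by auto
qed

lemma invariant:
  assumes b: "buchi Q Sig delta I F" and c: "complete_aut Q Sig delta" and al: "\<forall>k. \<alpha> k \<in> Sig"
  shows "\<forall>i p q. RelS Q Sig delta F p q \<longrightarrow> (p, i) \<in> runV delta I \<alpha> \<longrightarrow> (q, i) \<in> runV delta I \<alpha>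
              \<longrightarrow> (p, i) \<in> subG delta I F \<alpha> j \<longrightarrow> (q, i) \<in> subG delta I F \<alpha> j"
proof (induction j)
  case 0 then show ?case by simp
next
  case (Suc j)
  let ?S = "subG delta I F \<alpha> j"
  have SV: "?S \<subseteq> runV delta I \<alpha>" by (rule subG_V)
  show ?case
  proof (intro allI impI)
    fix i p q
    assume r: "RelS Q Sig delta F p q" and pV: "(p, i) \<in> runV delta I \<alpha>" and qV: "(q, i) \<in> runV delta I \<alpha>"
      and pS1: "(p, i) \<in> subG delta I F \<alpha> (Suc j)"
    have pS: "(p, i) \<in> ?S" using pS1 subG_Suc_sub by blast
    have qS: "(q, i) \<in> ?S" using Suc.IH r pV qV pS by blast
    note key = sim_reach[OF b c al Suc.IH SV r pS qV]
    show "(q, i) \<in> subG delta I F \<alpha> (Suc j)"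
    proof (cases "even j")
      case True
      have pinf: "infinite (reach_in delta I \<alpha> ?S (p, i))"
        using pS1 pS True by (simp add: finite_vs_def)
      have "infinite (reach_in delta I \<alpha> ?S (q, i))"
      proof
        assume fin: "finite (reach_in delta I \<alpha> ?S (q, i))"
        have "reach_in delta I \<alpha> ?S (p, i) \<subseteq> Q \<times> (snd ` reach_in delta I \<alpha> ?S (q, i))"
        proof
          fix u assume "u \<in> reach_in delta I \<alpha> ?S (p, i)"
          then obtain q' where "(q', snd u) \<in> reach_in delta I \<alpha> ?S (q, i)"
            and "RelS Q Sig delta F (fst u) q'"
            using key unfolding reach_in_def by blast
          then show "u \<in> Q \<times> (snd ` reach_in delta I \<alpha> ?S (q, i))"
            unfolding RelS_def by (cases u) force
        qed
        moreover have "finite Q" using b unfolding buchi_def by blast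
        ultimately show False using pinf fin by (meson finite_SigmaI finite_imageI finite_subset)
      qed
      then show ?thesis using qS True by (simp add: finite_vs_def)
    next
      case False
      from pS1 pS False obtain u where u: "u \<in> reach_in delta I \<alpha> ?S (p, i)" and uF: "fst u \<in> F"
        by (auto simp add: endangered_vs_def)
      obtain q' where q'r: "(q', snd u) \<in> reach_in delta I \<alpha> ?S (q, i)"
        and rr: "RelS Q Sig delta F (fst u) q'"
        using key u unfolding reach_in_def by blast
      obtain a0 where "a0 \<in> Sig" using al by blast
      have "q' \<in> F" using RelS_F[OF b c \<open>a0 \<in> Sig\<close> rr uF] .
      then have "(q, i) \<notin> endangered_vs delta I F \<alpha> ?S"
        using q'r unfolding endangered_vs_def by force
      then show ?thesis using qS False by simp
    qed
  qed
qed

theorem lemma7: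
  fixes Q :: "'q set" and Sig :: "'a set" and delta :: "'q \<Rightarrow> 'a \<Rightarrow> 'q set"
    and I F :: "'q set" and p q :: 'q and \<alpha> :: "nat \<Rightarrow> 'a" and i :: nat
  assumes "buchi Q Sig delta I F"
    and "complete_aut Q Sig delta"
    and "p \<in> Q" and "q \<in> Q"
    and "dsim Q Sig delta F p q"
    and "\<forall>k. \<alpha> k \<in> Sig"
    and "(p, i) \<in> runV delta I \<alpha>"
    and "(q, i) \<in> runV delta I \<alpha>"
  shows "rank Q delta I F \<alpha> (p, i) \<le> rank Q delta I F \<alpha> (q, i)"
proof -
  let ?G = "subG delta I F \<alpha>"
  have r: "RelS Q Sig delta F p q" using assms unfolding RelS_def by blast
  have inv: "(p, i) \<in> ?G j \<Longrightarrow> (q, i) \<in> ?G j" for j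
    using invariant[OF assms(1,2,6), of j] r assms(7,8) by blast
  show ?thesis
  proof (cases "\<exists>j \<le> 2 * card Q. (q, i) \<in> ?G j - ?G (Suc j)")
    case False
    show ?thesis unfolding rank_def if_not_P[OF False] by (rule enat_ord_simps(3))
  next
    case True
    define j0 where "j0 = (LEAST j. (q, i) \<in> ?G j - ?G (Suc j))"
    from True obtain j1 where j1: "j1 \<le> 2 * card Q" "(q, i) \<in> ?G j1 - ?G (Suc j1)" by blast
    have j0: "(q, i) \<in> ?G j0 - ?G (Suc j0)" unfolding j0_def using j1(2) by (rule LeastI)
    have "j0 \<le> j1" unfolding j0_def using j1(2) by (rule Least_le)
    have pn: "(p, i) \<notin> ?G (Suc j0)" using inv j0 by blast
    define m where "m = (LEAST m. (p, i) \<notin> ?G m)"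
    have mn: "(p, i) \<notin> ?G m" unfolding m_def using pn by (rule LeastI)
    have mle: "m \<le> Suc j0" unfolding m_def using pn by (rule Least_le)
    have "m \<noteq> 0" using mn assms(7) by (cases m) auto
    then obtain m' where m': "m = Suc m'" by (cases m) auto
    have pm': "(p, i) \<in> ?G m'" using m' unfolding m_def
      by (metis (no_types, lifting) lessI not_less_Least)
    have pin: "(p, i) \<in> ?G m' - ?G (Suc m')" using pm' mn m' by simp
    have "m' \<le> j0" using mle m' by simp
    then have ex: "\<exists>j \<le> 2 * card Q. (p, i) \<in> ?G j - ?G (Suc j)"
      using pin \<open>j0 \<le> j1\<close> j1(1) by (meson order_trans)
    have "(LEAST j. (p, i) \<in> ?G j - ?G (Suc j)) \<le> m'" using pin by (rule Least_le)
    then have "(LEAST j. (p, i) \<in> ?G j - ?G (Suc j)) \<le> j0" using \<open>m' \<le> j0\<close> by simp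
    then show ?thesis unfolding rank_def if_P[OF ex] if_P[OF True] j0_def[symmetric] by simp
  qed
qed

end
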